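(* Let $K$ be a field, $m\ge2$, $d_1,\ldots,d_m$ positive integers, $S=K[x_1,\ldots,x_m,y_1,\ldots,y_m]$, $f_{ij}=x_i^{d_i}y_j^{d_j}-x_j^{d_j}y_i^{d_i}$ for $1\le i<j\le m$, $I_2(D)=(f_{ij}:1\le i<j\le m)$ (the ideal of $2$-minors of $\begin{pmatrix}x_1^{d_1}&\cdots&x_m^{d_m}\\ y_1^{d_1}&\cdots&y_m^{d_m}\end{pmatrix}$), and $J_L=(f_{12},f_{13},\ldots,f_{1m})$. Then $J_L=I_2(D)\cap(x_1^{d_1},y_1^{d_1})$. *)

theory Defs
  imports Main "HOL-Library.Poly_Mapping"
begin

(* Multivariate polynomials over a coefficient ring 'a in variables of type 'v:
  finitely supported maps from monomials (exponent vectors 'v \<Rightarrow>\<^sub>0 nat) to coefficients,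
  with the convolution product of HOL-Library.Poly_Mapping. *)

type_synonym ('v, 'a) mpoly = "('v \<Rightarrow>\<^sub>0 nat) \<Rightarrow>\<^sub>0 'a"

definition mvar :: "'v \<Rightarrow> ('v, 'a::comm_ring_1) mpoly" where
  "mvar v = Poly_Mapping.single (Poly_Mapping.single v 1) 1"

text \<open>Variables: (False, i) is x_i and (True, i) is y_i.\<close>

definition xv :: "nat \<Rightarrow> (bool \<times> nat, 'a::comm_ring_1) mpoly" where
  "xv i = mvar (False, i)"

definition yv :: "nat \<Rightarrow> (bool \<times> nat, 'a::comm_ring_1) mpoly" where
  "yv i = mvar (True, i)"

text \<open>The polynomial ring S = K[x_1..x_m, y_1..y_m], as the set of polynomials involving
  only the variables x_i, y_i with 1 \<le> i \<le> m.\<close>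

definition polyring :: "nat \<Rightarrow> (bool \<times> nat, 'a::comm_ring_1) mpoly set" where
  "polyring m = {p. \<forall>\<mu>\<in>Poly_Mapping.keys p. Poly_Mapping.keys \<mu> \<subseteq> UNIV \<times> {1..m}}"

definition ideal_gen :: "'b::comm_ring_1 set \<Rightarrow> 'b set \<Rightarrow> 'b set" where
  "ideal_gen R G = {p. \<exists>F c. finite F \<and> F \<subseteq> G \<and> (\<forall>g\<in>F. c g \<in> R) \<and> p = (\<Sum>g\<in>F. c g * g)}"

definition fmin :: "(nat \<Rightarrow> nat) \<Rightarrow> nat \<Rightarrow> nat \<Rightarrow> (bool \<times> nat, 'a::comm_ring_1) mpoly" where
  "fmin d i j = xv i ^ d i * yv j ^ d j - xv j ^ d j * yv i ^ d i"

end

theory Submission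
  imports Defs
begin

definition kp :: "('m \<Rightarrow> bool) \<Rightarrow> ('m \<Rightarrow>\<^sub>0 'a::zero) \<Rightarrow> bool" where
  "kp Q p \<longleftrightarrow> (\<forall>\<mu>\<in>Poly_Mapping.keys p. Q \<mu>)"

lemma kp_0[simp]: "kp Q 0" by (simp add: kp_def)

lemma kp_add: assumes "kp Q p" "kp Q q" shows "kp Q (p + q)"
  unfolding kp_def
proof
  fix \<mu> assume "\<mu> \<in> Poly_Mapping.keys (p + q)"
  then have "\<mu> \<in> Poly_Mapping.keys p \<union> Poly_Mapping.keys q" by (rule subsetD[OF keys_add])
  then show "Q \<mu>" using assms unfolding kp_def by auto
qed

lemma kp_diff: assumes "kp Q p" "kp Q (q::'m \<Rightarrow>\<^sub>0 'a::ab_group_add)" shows "kp Q (p - q)"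
  unfolding kp_def
proof
  fix \<mu> assume "\<mu> \<in> Poly_Mapping.keys (p - q)"
  then have "\<mu> \<in> Poly_Mapping.keys p \<union> Poly_Mapping.keys q" by (rule subsetD[OF keys_diff])
  then show "Q \<mu>" using assms unfolding kp_def by auto
qed

lemma kp_uminus: "kp Q (q::'m \<Rightarrow>\<^sub>0 'a::ab_group_add) \<Longrightarrow> kp Q (- q)"
  unfolding kp_def by simp

lemma kp_mult:
  assumes "kp Q1 p" "kp Q2 (q :: ('m::monoid_add) \<Rightarrow>\<^sub>0 'a::semiring_0)"
    "\<And>a b. Q1 a \<Longrightarrow> Q2 b \<Longrightarrow> Q3 (a + b)"
  shows "kp Q3 (p * q)"
  unfolding kp_def
proof
  fix \<mu> assume "\<mu> \<in> Poly_Mapping.keys (p * q)"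
  then have "\<mu> \<in> {a + b | a b. a \<in> Poly_Mapping.keys p \<and> b \<in> Poly_Mapping.keys q}"
    by (rule subsetD[OF keys_mult])
  then obtain a b where "\<mu> = a + b" "a \<in> Poly_Mapping.keys p" "b \<in> Poly_Mapping.keys q" by blast
  then show "Q3 \<mu>" using assms unfolding kp_def by auto
qed

lemma kp_true: "kp (\<lambda>_. True) p" by (simp add: kp_def)

lemma kp_sum: "(\<And>x. x \<in> A \<Longrightarrow> kp Q (f x)) \<Longrightarrow> kp Q (sum f A)"
  by (induction A rule: infinite_finite_induct) (auto intro: kp_add)

lemma kp_single: "Q a \<Longrightarrow> kp Q (Poly_Mapping.single a b)"
  by (simp add: kp_def)

lemma kp_empty: "kp Q p \<Longrightarrow> kp (\<lambda>x. \<not> Q x) p \<Longrightarrow> p = 0"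
  unfolding kp_def by (metis all_not_in_conv keys_eq_empty)

lemma pr_kp: "polyring m = {p. kp (\<lambda>\<mu>. Poly_Mapping.keys \<mu> \<subseteq> UNIV \<times> {1..m}) p}"
  unfolding polyring_def kp_def by simp


lemma ideal_gen_induct[consumes 1]:
  assumes "p \<in> ideal_gen R G" "P 0" "\<And>r g. r \<in> R \<Longrightarrow> g \<in> G \<Longrightarrow> P (r * g)"
    "\<And>p q. P p \<Longrightarrow> P q \<Longrightarrow> P (p + q)"
  shows "P p"
proof -
  obtain F c where F: "finite F" "F \<subseteq> G" "\<forall>g\<in>F. c g \<in> R" "p = (\<Sum>g\<in>F. c g * g)"
    using assms(1) unfolding ideal_gen_def by blast
  have "F \<subseteq> G \<longrightarrow> (\<forall>g\<in>F. c g \<in> R) \<longrightarrow> P (\<Sum>g\<in>F. c g * g)"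
    using F(1) by (induction F rule: finite_induct) (auto intro: assms(2-4))
  then show ?thesis using F by blast
qed

lemma ideal_gen_0: "0 \<in> ideal_gen R G"
  unfolding ideal_gen_def by (rule CollectI, rule exI[of _ "{}"]) auto

lemma ideal_gen_gen: "r \<in> R \<Longrightarrow> g \<in> G \<Longrightarrow> r * g \<in> ideal_gen R G"
  unfolding ideal_gen_def by (rule CollectI, rule exI[of _ "{g}"], rule exI[of _ "\<lambda>_. r"]) auto

lemma ideal_gen_add:
  assumes R0: "0 \<in> R" and Radd: "\<And>a b. a \<in> R \<Longrightarrow> b \<in> R \<Longrightarrow> a + b \<in> R"
    and p: "p \<in> ideal_gen R G" and q: "q \<in> ideal_gen R G"
  shows "p + q \<in> ideal_gen R G"
proof -
  obtain F1 c1 where F1: "finite F1" "F1 \<subseteq> G" "\<forall>g\<in>F1. c1 g \<in> R" "p = (\<Sum>g\<in>F1. c1 g * g)"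
    using p unfolding ideal_gen_def by blast
  obtain F2 c2 where F2: "finite F2" "F2 \<subseteq> G" "\<forall>g\<in>F2. c2 g \<in> R" "q = (\<Sum>g\<in>F2. c2 g * g)"
    using q unfolding ideal_gen_def by blast
  define c where "c g = (if g \<in> F1 then c1 g else 0) + (if g \<in> F2 then c2 g else 0)" for g
  have "(\<Sum>g\<in>F1 \<union> F2. c g * g) = (\<Sum>g\<in>F1 \<union> F2. (if g \<in> F1 then c1 g * g else 0))
        + (\<Sum>g\<in>F1 \<union> F2. (if g \<in> F2 then c2 g * g else 0))"
    by (subst sum.distrib[symmetric]) (rule sum.cong; simp add: c_def distrib_right)
  also have "\<dots> = p + q"
    using F1 F2 by (simp add: sum.If_cases Int_absorb1 Int_absorb2 inf_commute)
  finally have "p + q = (\<Sum>g\<in>F1 \<union> F2. c g * g)" by simp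
  moreover have "\<forall>g\<in>F1 \<union> F2. c g \<in> R" using F1 F2 R0 Radd unfolding c_def by auto
  ultimately show ?thesis unfolding ideal_gen_def
    using F1(1,2) F2(1,2) by (intro CollectI exI[of _ "F1 \<union> F2"] exI[of _ c]) simp
qed

lemma ideal_gen_mult:
  assumes R0: "0 \<in> R" and Radd: "\<And>a b. a \<in> R \<Longrightarrow> b \<in> R \<Longrightarrow> a + b \<in> R"
    and Rmul: "\<And>a b. a \<in> R \<Longrightarrow> b \<in> R \<Longrightarrow> a * b \<in> R"
    and r: "r \<in> R" and p: "p \<in> ideal_gen R G"
  shows "r * p \<in> ideal_gen R G"
  using p
proof (induction rule: ideal_gen_induct)
  case 1 then show ?case by (simp add: ideal_gen_0)
next
  case (2 s g) then show ?case using ideal_gen_gen[of "r * s" R g G] Rmul r by (simp add: mult.assoc)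
next
  case (3 p q) then show ?case using ideal_gen_add[OF R0 Radd] by (simp add: distrib_left)
qed

lemma ideal_gen_mono: assumes "G \<subseteq> H" shows "ideal_gen R G \<subseteq> ideal_gen R H"
proof
  fix p assume "p \<in> ideal_gen R G"
  then obtain F c where F: "finite F" "F \<subseteq> G" "\<forall>g\<in>F. c g \<in> R" "p = (\<Sum>g\<in>F. c g * g)"
    unfolding ideal_gen_def by blast
  then show "p \<in> ideal_gen R H" unfolding ideal_gen_def
    using assms by (intro CollectI exI[of _ F] exI[of _ c]) auto
qed

lemma pr_0: "0 \<in> polyring m" by (simp add: pr_kp)
lemma pr_1: "1 \<in> polyring m" by (simp add: pr_kp kp_def)
lemma pr_add: "a \<in> polyring m \<Longrightarrow> b \<in> polyring m \<Longrightarrow> a + b \<in> polyring m"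
  by (simp add: pr_kp kp_add)
lemma pr_uminus: "a \<in> polyring m \<Longrightarrow> - a \<in> polyring m"
  by (simp add: pr_kp kp_uminus)
lemma pr_diff: "a \<in> polyring m \<Longrightarrow> b \<in> polyring m \<Longrightarrow> a - b \<in> polyring m"
  by (simp add: pr_kp kp_diff)
lemma pr_mult: "a \<in> polyring m \<Longrightarrow> b \<in> polyring m \<Longrightarrow> a * b \<in> polyring m"
  unfolding pr_kp by (auto elim!: kp_mult dest: subsetD[OF keys_add])
lemma pr_power: "a \<in> polyring m \<Longrightarrow> a ^ n \<in> polyring m"
  by (induction n) (auto simp: pr_1 pr_mult)
lemma pr_mvar: "snd v \<in> {1..m} \<Longrightarrow> mvar v \<in> polyring m"
  unfolding pr_kp mvar_def by (auto simp: kp_def mem_Times_iff)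
lemma pr_xv: "i \<in> {1..m} \<Longrightarrow> xv i \<in> polyring m"
  unfolding xv_def by (rule pr_mvar) simp
lemma pr_yv: "i \<in> {1..m} \<Longrightarrow> yv i \<in> polyring m"
  unfolding yv_def by (rule pr_mvar) simp

lemma ig_add: "p \<in> ideal_gen (polyring m) G \<Longrightarrow> q \<in> ideal_gen (polyring m) G \<Longrightarrow> p + q \<in> ideal_gen (polyring m) G"
  by (rule ideal_gen_add[OF pr_0 pr_add])
lemma ig_mult: "r \<in> polyring m \<Longrightarrow> p \<in> ideal_gen (polyring m) G \<Longrightarrow> r * p \<in> ideal_gen (polyring m) G"
  by (rule ideal_gen_mult[OF pr_0 pr_add pr_mult])
lemma ig_uminus: "p \<in> ideal_gen (polyring m) G \<Longrightarrow> - p \<in> ideal_gen (polyring m) G"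
  using ig_mult[OF pr_uminus[OF pr_1]] by (metis mult_minus1)
lemma ig_diff: "p \<in> ideal_gen (polyring m) G \<Longrightarrow> q \<in> ideal_gen (polyring m) G \<Longrightarrow> p - q \<in> ideal_gen (polyring m) G"
  using ig_add[OF _ ig_uminus] by (metis diff_conv_add_uminus)


lemma mvar_power: "(mvar v :: ('v, 'a::comm_ring_1) mpoly) ^ n = Poly_Mapping.single (Poly_Mapping.single v n) 1"
proof (induction n)
  case 0 then show ?case by simp
next
  case (Suc n)
  have "Poly_Mapping.single v 1 + Poly_Mapping.single v n = Poly_Mapping.single v (Suc n)"
    by (simp add: single_add[symmetric])
  with Suc show ?case
    by (simp add: mvar_def mult_single)
qed

lemma update_as_add: "a \<notin> Poly_Mapping.keys f \<Longrightarrow> Poly_Mapping.update a b f = f + Poly_Mapping.single a b"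
  by (rule poly_mapping_eqI) (auto simp: lookup_update lookup_add lookup_single in_keys_iff when_def)

definition sm :: "nat \<Rightarrow> (bool \<times> nat \<Rightarrow>\<^sub>0 nat) \<Rightarrow> bool" where
  "sm n \<mu> \<longleftrightarrow> Poly_Mapping.lookup \<mu> (False,1) < n \<and> Poly_Mapping.lookup \<mu> (True,1) < n"

definition nox :: "(bool \<times> nat \<Rightarrow>\<^sub>0 nat) \<Rightarrow> bool" where
  "nox \<mu> \<longleftrightarrow> Poly_Mapping.lookup \<mu> (False,1) = 0 \<and> Poly_Mapping.lookup \<mu> (True,1) = 0"

lemma nox_mult: "kp nox p \<Longrightarrow> kp nox (q::(bool \<times> nat, 'a::comm_ring_1) mpoly) \<Longrightarrow> kp nox (p * q)"
  by (erule kp_mult, assumption) (simp add: nox_def lookup_add)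

lemma nox_1: "kp nox (1::(bool \<times> nat, 'a::comm_ring_1) mpoly)"
  by (simp add: kp_def nox_def)

lemma nox_power: "kp nox (p::(bool \<times> nat, 'a::comm_ring_1) mpoly) \<Longrightarrow> kp nox (p ^ n)"
  by (induction n) (auto simp: nox_1 nox_mult)

lemma nox_mvar: "snd v \<noteq> 1 \<Longrightarrow> kp nox (mvar v :: (bool \<times> nat, 'a::comm_ring_1) mpoly)"
  unfolding mvar_def by (rule kp_single) (auto simp: nox_def lookup_single when_def)

lemma nox_fmin: "2 \<le> i \<Longrightarrow> 2 \<le> j \<Longrightarrow> kp nox (fmin d i j :: (bool \<times> nat, 'a::comm_ring_1) mpoly)"
  unfolding fmin_def xv_def yv_def
  by (intro kp_diff nox_mult nox_power nox_mvar) auto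

lemma sm_nox: "kp (sm n) p \<Longrightarrow> kp nox (q::(bool \<times> nat, 'a::comm_ring_1) mpoly) \<Longrightarrow> kp (sm n) (p * q)"
  by (erule kp_mult, assumption) (simp add: nox_def sm_def lookup_add)

lemma big_x: "kp (\<lambda>\<mu>. \<not> sm n \<mu>) (xv 1 ^ n * (u::(bool \<times> nat, 'a::comm_ring_1) mpoly))"
proof -
  have "kp (\<lambda>\<mu>. n \<le> Poly_Mapping.lookup \<mu> (False,1)) (xv 1 ^ n :: (bool \<times> nat, 'a::comm_ring_1) mpoly)"
    unfolding xv_def mvar_power by (rule kp_single) simp
  then show ?thesis
    by (rule kp_mult[OF _ kp_true]) (simp add: sm_def lookup_add)
qed

lemma big_y: "kp (\<lambda>\<mu>. \<not> sm n \<mu>) (yv 1 ^ n * (u::(bool \<times> nat, 'a::comm_ring_1) mpoly))"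
proof -
  have "kp (\<lambda>\<mu>. n \<le> Poly_Mapping.lookup \<mu> (True,1)) (yv 1 ^ n :: (bool \<times> nat, 'a::comm_ring_1) mpoly)"
    unfolding yv_def mvar_power by (rule kp_single) simp
  then show ?thesis
    by (rule kp_mult[OF _ kp_true]) (simp add: sm_def lookup_add)
qed

lemma big_ideal:
  assumes "p \<in> ideal_gen R {xv 1 ^ n, yv 1 ^ n :: (bool \<times> nat, 'a::comm_ring_1) mpoly}"
  shows "kp (\<lambda>\<mu>. \<not> sm n \<mu>) p"
  using assms
proof (induction rule: ideal_gen_induct)
  case (2 r g) then show ?case using big_x[of n r] big_y[of n r] by (auto simp: mult.commute)
qed (auto intro: kp_add)

lemma decomp_single:
  assumes "Poly_Mapping.keys a \<subseteq> UNIV \<times> {1..m}" "1 \<le> m"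
  shows "\<exists>s u v. Poly_Mapping.single a b = s + xv 1 ^ n * u + yv 1 ^ n * v \<and> kp (sm n) s
     \<and> u \<in> polyring m \<and> v \<in> polyring m"
proof (cases "sm n a")
  case True
  then show ?thesis
    by (intro exI[of _ "Poly_Mapping.single a b"] exI[of _ 0]) (auto simp: kp_single pr_0)
next
  case False
  show ?thesis
  proof (cases "Poly_Mapping.lookup a (False,1) < n")
    case False
    define a' where "a' = Poly_Mapping.update (False,1) (Poly_Mapping.lookup a (False,1) - n) a"
    have ka: "Poly_Mapping.keys a' \<subseteq> UNIV \<times> {1..m}"
      using assms unfolding a'_def keys_update by auto
    have "a = Poly_Mapping.single (False,1) n + a'"
      using False by (intro poly_mapping_eqI) (auto simp: a'_def lookup_add lookup_update lookup_single when_def)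
    then have "Poly_Mapping.single a b = xv 1 ^ n * Poly_Mapping.single a' b"
      unfolding xv_def mvar_power mult_single by simp
    moreover have "Poly_Mapping.single a' b \<in> polyring m"
      using ka unfolding polyring_def by simp
    ultimately show ?thesis
      by (intro exI[of _ 0] exI[of _ "Poly_Mapping.single a' b"] exI[of _ 0]) (auto simp: pr_0)
  next
    case True
    then have F: "\<not> Poly_Mapping.lookup a (True,1) < n" using \<open>\<not> sm n a\<close> by (simp add: sm_def)
    define a' where "a' = Poly_Mapping.update (True,1) (Poly_Mapping.lookup a (True,1) - n) a"
    have ka: "Poly_Mapping.keys a' \<subseteq> UNIV \<times> {1..m}"
      using assms unfolding a'_def keys_update by auto
    have "a = Poly_Mapping.single (True,1) n + a'"
      using F by (intro poly_mapping_eqI) (auto simp: a'_def lookup_add lookup_update lookup_single when_def)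
    then have "Poly_Mapping.single a b = yv 1 ^ n * Poly_Mapping.single a' b"
      unfolding yv_def mvar_power mult_single by simp
    moreover have "Poly_Mapping.single a' b \<in> polyring m"
      using ka unfolding polyring_def by simp
    ultimately show ?thesis
      by (intro exI[of _ 0] exI[of _ 0] exI[of _ "Poly_Mapping.single a' b"]) (auto simp: pr_0)
  qed
qed

lemma decomp:
  assumes "1 \<le> m"
  shows "c \<in> polyring m \<Longrightarrow> \<exists>s u v. c = s + xv 1 ^ n * u + yv 1 ^ n * v \<and> kp (sm n) s
     \<and> u \<in> polyring m \<and> v \<in> polyring m"
proof (induction c rule: update_induct)
  case const
  then show ?case by (intro exI[of _ 0]) (auto simp: pr_0)
next
  case (update f a b)
  have eq: "Poly_Mapping.update a b f = f + Poly_Mapping.single a b"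
    using update.hyps(1) by (rule update_as_add)
  have "Poly_Mapping.keys (Poly_Mapping.update a b f) = insert a (Poly_Mapping.keys f)"
    using update.hyps(2) by (simp add: keys_update)
  then have kf: "f \<in> polyring m" and ka: "Poly_Mapping.keys a \<subseteq> UNIV \<times> {1..m}"
    using update.prems unfolding polyring_def by auto
  obtain s u v where 1: "f = s + xv 1 ^ n * u + yv 1 ^ n * v" "kp (sm n) s" "u \<in> polyring m" "v \<in> polyring m"
    using update.IH kf by blast
  obtain s' u' v' where 2: "Poly_Mapping.single a b = s' + xv 1 ^ n * u' + yv 1 ^ n * v'" "kp (sm n) s'"
     "u' \<in> polyring m" "v' \<in> polyring m"
    using decomp_single[OF ka assms] by blast
  show ?case unfolding eq
    by (rule exI[of _ "s + s'"], rule exI[of _ "u + u'"], rule exI[of _ "v + v'"])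
       (simp add: 1 2 kp_add pr_add algebra_simps)
qed


lemma x1_fmin: "xv 1 ^ d 1 * fmin d i j = xv i ^ d i * fmin d 1 j - xv j ^ d j * fmin d 1 i"
  by (simp add: fmin_def algebra_simps)

lemma y1_fmin: "yv 1 ^ d 1 * fmin d i j = yv i ^ d i * fmin d 1 j - yv j ^ d j * fmin d 1 i"
  by (simp add: fmin_def algebra_simps)

theorem proposition4p13:
  fixes m :: nat and d :: "nat \<Rightarrow> nat"
  assumes "m \<ge> 2" and "\<forall>i\<in>{1..m}. d i > 0"
  shows "ideal_gen (polyring m :: (bool \<times> nat, 'a::field) mpoly set)
            {fmin d 1 j | j. 2 \<le> j \<and> j \<le> m}
       = ideal_gen (polyring m) {fmin d i j | i j. 1 \<le> i \<and> i < j \<and> j \<le> m}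
         \<inter> ideal_gen (polyring m) {xv 1 ^ d 1, yv 1 ^ d 1}"
  (is "?J = ?I \<inter> ?Q")
proof
  have m1: "1 \<le> m" using assms(1) by simp
  show "?J \<subseteq> ?I \<inter> ?Q"
  proof
    fix p assume p: "p \<in> ?J"
    have sub: "{fmin d 1 j | j. 2 \<le> j \<and> j \<le> m} \<subseteq> {fmin d i j | i j. 1 \<le> i \<and> i < j \<and> j \<le> m}"
    proof
      fix f assume "f \<in> {fmin d 1 j | j. 2 \<le> j \<and> j \<le> m}"
      then obtain j where "f = fmin d 1 j" "2 \<le> j" "j \<le> m" by blast
      then show "f \<in> {fmin d i j | i j. 1 \<le> i \<and> i < j \<and> j \<le> m}"
        by (intro CollectI exI[of _ "1::nat"] exI[of _ j]) simp
    qed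
    have "p \<in> ?I" using p by (rule subsetD[OF ideal_gen_mono[OF sub]])
    moreover have "p \<in> ?Q" using p
    proof (induction rule: ideal_gen_induct)
      case 1 then show ?case by (rule ideal_gen_0)
    next
      case (2 r g)
      then obtain j where j: "g = fmin d 1 j" "2 \<le> j" "j \<le> m" by blast
      have ry: "r * yv j ^ d j \<in> polyring m" and rx: "r * xv j ^ d j \<in> polyring m"
        using 2 j by (auto intro!: pr_mult pr_power pr_xv pr_yv)
      have "r * g = (r * yv j ^ d j) * xv 1 ^ d 1 - (r * xv j ^ d j) * yv 1 ^ d 1"
        unfolding j fmin_def by (simp add: algebra_simps)
      then show ?case using ry rx by (auto intro!: ig_diff ideal_gen_gen)
    next
      case (3 p q) then show ?case by (rule ig_add)
    qed
    ultimately show "p \<in> ?I \<inter> ?Q" by blast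
  qed
  show "?I \<inter> ?Q \<subseteq> ?J"
  proof
    fix g assume g: "g \<in> ?I \<inter> ?Q"
    have JQ: "?J \<subseteq> ?Q" using \<open>?J \<subseteq> ?I \<inter> ?Q\<close> by blast
    have key: "\<exists>T. g - T \<in> ?J \<and> kp (sm (d 1)) T" if "g \<in> ?I" for g
      using that
    proof (induction rule: ideal_gen_induct)
      case 1 then show ?case using ideal_gen_0 by (intro exI[of _ 0]) auto
    next
      case (2 r f)
      then obtain i j where ij: "f = fmin d i j" "1 \<le> i" "i < j" "j \<le> m" by blast
      show ?case
      proof (cases "i = 1")
        case True
        then have "r * f \<in> ?J" using 2 ij by (intro ideal_gen_gen) auto
        then show ?thesis by (intro exI[of _ 0]) auto
      next
        case False
        obtain s u v where d: "r = s + xv 1 ^ d 1 * u + yv 1 ^ d 1 * v" "kp (sm (d 1)) s"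
          "u \<in> polyring m" "v \<in> polyring m"
          using decomp[OF m1 2(1)] by blast
        have pi: "xv i ^ d i \<in> polyring m" "yv i ^ d i \<in> polyring m"
          "xv j ^ d j \<in> polyring m" "yv j ^ d j \<in> polyring m"
          using ij by (auto intro!: pr_power pr_xv pr_yv)
        have g1: "fmin d 1 j \<in> {fmin d 1 j | j. 2 \<le> j \<and> j \<le> m}"
          "fmin d 1 i \<in> {fmin d 1 j | j. 2 \<le> j \<and> j \<le> m}" using ij False by auto
        have X: "xv 1 ^ d 1 * f \<in> ?J"
          unfolding ij x1_fmin using pi g1 by (intro ig_diff ideal_gen_gen)
        have Y: "yv 1 ^ d 1 * f \<in> ?J"
          unfolding ij y1_fmin using pi g1 by (intro ig_diff ideal_gen_gen)
        have "r * f - s * f = u * (xv 1 ^ d 1 * f) + v * (yv 1 ^ d 1 * f)"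
          unfolding d(1) by (simp add: algebra_simps)
        also have "\<dots> \<in> ?J" by (rule ig_add[OF ig_mult[OF d(3) X] ig_mult[OF d(4) Y]])
        finally have "r * f - s * f \<in> ?J" .
        moreover have "kp (sm (d 1)) (s * f)"
          using d(2) nox_fmin[of i j d] ij False by (intro sm_nox) auto
        ultimately show ?thesis by blast
      qed
    next
      case (3 p q)
      then obtain T1 T2 where "p - T1 \<in> ?J" "kp (sm (d 1)) T1" "q - T2 \<in> ?J" "kp (sm (d 1)) T2"
        by blast
      then have "(p - T1) + (q - T2) \<in> ?J" "kp (sm (d 1)) (T1 + T2)"
        by (auto intro: ig_add kp_add)
      then show ?case by (intro exI[of _ "T1 + T2"]) (simp add: algebra_simps)
    qed
    obtain T where T: "g - T \<in> ?J" "kp (sm (d 1)) T" using key g by blast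
    have "kp (\<lambda>\<mu>. \<not> sm (d 1) \<mu>) (g - (g - T))"
    proof -
      have "g \<in> ?Q" using g by blast
      moreover have "g - T \<in> ?Q" using T(1) JQ by blast
      ultimately show ?thesis by (rule kp_diff[OF big_ideal big_ideal])
    qed
    then have "T = 0" using T(2) kp_empty by auto
    then show "g \<in> ?J" using T(1) by simp
  qed
qed

end
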